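(* If $2 \leq a < b$, then $I_{a,b} \leq a^{a+b-2}$.
   Context: $K_{a,b}$ is the complete bipartite graph with partite sets of sizes $a$ and $b$. $I_{a,b}$ denotes the number of isomorphism classes (as unlabeled graphs) of spanning trees of $K_{a,b}$. *)

theory Defs
  imports Main
begin

definition simple_graph :: "'a set \<Rightarrow> 'a set set \<Rightarrow> bool" where
  "simple_graph V E \<longleftrightarrow> (\<forall>e\<in>E. \<exists>u v. u \<in> V \<and> v \<in> V \<and> u \<noteq> v \<and> e = {u, v})"

definition adj :: "'a set set \<Rightarrow> 'a \<Rightarrow> 'a \<Rightarrow> bool" where
  "adj E u v \<longleftrightarrow> {u, v} \<in> E"

definition connected_graph :: "'a set \<Rightarrow> 'a set set \<Rightarrow> bool" where
  "connected_graph V E \<longleftrightarrow> (\<forall>u\<in>V. \<forall>v\<in>V. (adj E)\<^sup>*\<^sup>* u v)"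

definition has_cycle :: "'a set \<Rightarrow> 'a set set \<Rightarrow> bool" where
  "has_cycle V E \<longleftrightarrow> (\<exists>xs. length xs \<ge> 3 \<and> distinct xs \<and> set xs \<subseteq> V \<and>
      (\<forall>i. i + 1 < length xs \<longrightarrow> {xs ! i, xs ! (i + 1)} \<in> E) \<and> {last xs, hd xs} \<in> E)"

definition is_tree :: "'a set \<Rightarrow> 'a set set \<Rightarrow> bool" where
  "is_tree V E \<longleftrightarrow> V \<noteq> {} \<and> simple_graph V E \<and> connected_graph V E \<and> \<not> has_cycle V E"

definition graph_iso :: "'a set \<Rightarrow> 'a set set \<Rightarrow> 'b set \<Rightarrow> 'b set set \<Rightarrow> bool" where
  "graph_iso V1 E1 V2 E2 \<longleftrightarrow> (\<exists>f. bij_betw f V1 V2 \<and>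
      (\<forall>u\<in>V1. \<forall>v\<in>V1. {u, v} \<in> E1 \<longleftrightarrow> {f u, f v} \<in> E2))"

definition Kab_verts :: "nat \<Rightarrow> nat \<Rightarrow> (nat + nat) set" where
  "Kab_verts a b = Inl ` {..<a} \<union> Inr ` {..<b}"

definition Kab_edges :: "nat \<Rightarrow> nat \<Rightarrow> (nat + nat) set set" where
  "Kab_edges a b = {{Inl i, Inr j} | i j. i < a \<and> j < b}"

definition spanning_trees_Kab :: "nat \<Rightarrow> nat \<Rightarrow> (nat + nat) set set set" where
  "spanning_trees_Kab a b = {T. T \<subseteq> Kab_edges a b \<and> is_tree (Kab_verts a b) T}"

definition tree_iso_rel :: "nat \<Rightarrow> nat \<Rightarrow> ((nat + nat) set set \<times> (nat + nat) set set) set" where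
  "tree_iso_rel a b = {(T1, T2). T1 \<in> spanning_trees_Kab a b \<and> T2 \<in> spanning_trees_Kab a b \<and>
      graph_iso (Kab_verts a b) T1 (Kab_verts a b) T2}"

definition I_count :: "nat \<Rightarrow> nat \<Rightarrow> nat" where
  "I_count a b = card (spanning_trees_Kab a b // tree_iso_rel a b)"

end

theory Submission
  imports Defs "HOL-Library.FuncSet"
begin


lemma walk_to_path:
  assumes "(adj E)\<^sup>*\<^sup>* u v"
  shows "\<exists>xs. xs \<noteq> [] \<and> hd xs = u \<and> last xs = v \<and> distinct xs \<and>
           (\<forall>i. i + 1 < length xs \<longrightarrow> {xs ! i, xs ! (i + 1)} \<in> E)"
  using assms
proof (induction rule: rtranclp_induct)
  case base
  show ?case by (rule exI[of _ "[u]"]) simp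
next
  case (step y z)
  then obtain xs where xs: "xs \<noteq> []" "hd xs = u" "last xs = y" "distinct xs"
    "\<forall>i. i + 1 < length xs \<longrightarrow> {xs ! i, xs ! (i + 1)} \<in> E" by blast
  show ?case
  proof (cases "z \<in> set xs")
    case True
    then obtain k where k: "k < length xs" "xs ! k = z" by (auto simp: in_set_conv_nth)
    let ?ys = "take (k + 1) xs"
    have "?ys \<noteq> []" using xs(1) by simp
    moreover have "hd ?ys = u" using xs(1,2) by (simp add: hd_take)
    moreover have "last ?ys = z" using k by (simp add: take_Suc_conv_app_nth)
    moreover have "distinct ?ys" using xs(4) by simp
    moreover have "\<forall>i. i + 1 < length ?ys \<longrightarrow> {?ys ! i, ?ys ! (i + 1)} \<in> E"
      using xs(5) by auto
    ultimately show ?thesis by blast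
  next
    case False
    let ?ys = "xs @ [z]"
    have "\<forall>i. i + 1 < length ?ys \<longrightarrow> {?ys ! i, ?ys ! (i + 1)} \<in> E"
    proof (intro allI impI)
      fix i assume i: "i + 1 < length ?ys"
      show "{?ys ! i, ?ys ! (i + 1)} \<in> E"
      proof (cases "i + 1 < length xs")
        case True
        then show ?thesis using xs(5) by (simp add: nth_append)
      next
        case False
        then have "i + 1 = length xs" using i by simp
        then have "i = length xs - 1" by simp
        then have "?ys ! i = last xs" "?ys ! (i+1) = z" using xs(1) \<open>i + 1 = length xs\<close>
          by (auto simp: nth_append last_conv_nth)
        then show ?thesis using step(2) xs(3) by (simp add: adj_def)
      qed
    qed
    then show ?thesis using xs False by (intro exI[of _ ?ys]) auto
  qed
qed

lemma adj_sym: "adj E u v = adj E v u"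
  by (simp add: adj_def insert_commute)

lemma rtc_sym: "(adj E)\<^sup>*\<^sup>* u v \<Longrightarrow> (adj E)\<^sup>*\<^sup>* v u"
proof -
  have "symp (adj E)" by (simp add: symp_def adj_sym)
  then have "symp (adj E)\<^sup>*\<^sup>*" by (rule symp_rtranclp)
  then show "(adj E)\<^sup>*\<^sup>* u v \<Longrightarrow> (adj E)\<^sup>*\<^sup>* v u" by (simp add: symp_def)
qed

lemma sg_edge:
  assumes "simple_graph V T" "{p, q} \<in> T"
  shows "p \<in> V" "q \<in> V"
proof -
  from assms obtain u v where uv: "u \<in> V" "v \<in> V" "{p, q} = {u, v}"
    unfolding simple_graph_def by blast
  have "p \<in> {u, v}" "q \<in> {u, v}" using uv(3) by (metis insertI1 insert_commute)+
  then show "p \<in> V" "q \<in> V" using uv by auto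
qed

lemma bridge:
  assumes sg: "simple_graph V T" and nc: "\<not> has_cycle V T"
    and e: "{x, y} \<in> T" and p: "(adj (T - {{x,y}}))\<^sup>*\<^sup>* x y"
  shows False
proof -
  from sg e obtain u v where uv: "u \<in> V" "v \<in> V" "u \<noteq> v" "{x, y} = {u, v}"
    unfolding simple_graph_def by blast
  then have xy: "x \<noteq> y" "x \<in> V" "y \<in> V" by (auto simp: doubleton_eq_iff)
  from walk_to_path[OF p] obtain xs where xs: "xs \<noteq> []" "hd xs = x" "last xs = y" "distinct xs"
    "\<forall>i. i + 1 < length xs \<longrightarrow> {xs ! i, xs ! (i + 1)} \<in> T - {{x,y}}" by blast
  have l2: "length xs \<ge> 2"
  proof (rule ccontr)
    assume "\<not> length xs \<ge> 2"
    moreover have "length xs \<noteq> 0" using xs(1) by simp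
    ultimately have "length xs = 1" by linarith
    then have "hd xs = last xs" by (cases xs) auto
    then show False using xs(2,3) xy(1) by simp
  qed
  have l3: "length xs \<ge> 3"
  proof (rule ccontr)
    assume "\<not> length xs \<ge> 3"
    then have "length xs = 2" using l2 by simp
    then have "xs ! 0 = x" "xs ! 1 = y" using xs(2,3) xs(1)
      by (auto simp: hd_conv_nth last_conv_nth)
    moreover have "{xs ! 0, xs ! (0 + 1)} \<in> T - {{x,y}}" using xs(5) \<open>length xs = 2\<close> by simp
    ultimately show False by simp
  qed
  have edges: "\<forall>i. i + 1 < length xs \<longrightarrow> {xs ! i, xs ! (i + 1)} \<in> T" using xs(5) by blast
  have inV: "set xs \<subseteq> V"
  proof
    fix w assume "w \<in> set xs"
    then obtain i where i: "i < length xs" "xs ! i = w" by (auto simp: in_set_conv_nth)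
    show "w \<in> V"
    proof (cases "i + 1 < length xs")
      case True
      then have "{w, xs ! (i+1)} \<in> T" using edges i by auto
      then show ?thesis using sg_edge[OF sg] by blast
    next
      case False
      then have "i > 0" "i - 1 + 1 < length xs" using i l2 by auto
      then have "{xs ! (i - 1), xs ! (i - 1 + 1)} \<in> T" using edges by blast
      then have "{xs ! (i - 1), w} \<in> T" using \<open>i > 0\<close> i by simp
      then show ?thesis using sg_edge[OF sg] by blast
    qed
  qed
  have "{last xs, hd xs} \<in> T" using e xs(2,3) by (simp add: insert_commute)
  then have "has_cycle V T" unfolding has_cycle_def using l3 xs(4) inV edges by (intro exI[of _ xs]) simp
  then show False using nc by simp
qed



lemma tree_parent:
  assumes t: "is_tree V T" and r: "r \<in> V"
  shows "\<exists>p. (\<forall>v\<in>V - {r}. p v \<in> V \<and> {v, p v} \<in> T) \<and> T = {{v, p v} | v. v \<in> V \<and> v \<noteq> r}"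
proof -
  have sg: "simple_graph V T" and cg: "connected_graph V T" and nc: "\<not> has_cycle V T"
    using t unfolding is_tree_def by auto
  define d where "d v = (LEAST n. (adj T ^^ n) r v)" for v
  have dP: "(adj T ^^ d v) r v" if "v \<in> V" for v
  proof -
    have "(adj T)\<^sup>*\<^sup>* r v" using cg r that unfolding connected_graph_def by blast
    then obtain n where "(adj T ^^ n) r v" using rtranclp_imp_relpowp by metis
    then show ?thesis unfolding d_def by (rule LeastI)
  qed
  have dle: "d v \<le> n" if "(adj T ^^ n) r v" for v n
    unfolding d_def using that by (rule Least_le)
  have par: "\<exists>u. adj T u v \<and> d u < d v" if "v \<in> V" "v \<noteq> r" for v
  proof -
    have h: "(adj T ^^ d v) r v" using dP that(1) .
    have "d v \<noteq> 0" using h that(2) by (metis relpowp.simps(1))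
    then obtain m where m: "d v = Suc m" by (cases "d v") auto
    with h have "(adj T ^^ Suc m) r v" by simp
    then obtain u where u: "(adj T ^^ m) r u" "adj T u v" by (rule relpowp_Suc_E)
    have "d u \<le> m" using dle[OF u(1)] .
    then show ?thesis using u(2) m by (intro exI[of _ u]) simp
  qed
  define p where "p v = (SOME u. adj T u v \<and> d u < d v)" for v
  have pp: "adj T (p v) v \<and> d (p v) < d v" if "v \<in> V" "v \<noteq> r" for v
    unfolding p_def using par[OF that] by (rule someI_ex)
  have pT: "{v, p v} \<in> T" if "v \<in> V" "v \<noteq> r" for v
    using pp[OF that] by (simp add: adj_def insert_commute)
  have pV: "p v \<in> V" if "v \<in> V" "v \<noteq> r" for v
    using sg_edge[OF sg pT[OF that]] by simp
  have sub: "T \<subseteq> {{v, p v} | v. v \<in> V \<and> v \<noteq> r}"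
  proof
    fix e assume eT: "e \<in> T"
    show "e \<in> {{v, p v} | v. v \<in> V \<and> v \<noteq> r}"
    proof (rule ccontr)
      assume nP: "e \<notin> {{v, p v} | v. v \<in> V \<and> v \<noteq> r}"
      from sg eT obtain x y where xy: "x \<in> V" "y \<in> V" "e = {x, y}"
        unfolding simple_graph_def by blast
      have reach: "(adj (T - {e}))\<^sup>*\<^sup>* r v" if "v \<in> V" for v
        using that
      proof (induction "d v" arbitrary: v rule: less_induct)
        case less
        show ?case
        proof (cases "v = r")
          case True then show ?thesis by simp
        next
          case False
          have "d (p v) < d v" using pp[OF less.prems False] by simp
          then have "(adj (T - {e}))\<^sup>*\<^sup>* r (p v)" using less.hyps pV[OF less.prems False] by blast
          moreover have "{p v, v} \<in> T - {e}"
            using pT[OF less.prems False] nP less.prems False by (auto simp: insert_commute)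
          then have "adj (T - {e}) (p v) v" by (simp add: adj_def)
          ultimately show ?thesis by (rule rtranclp.rtrancl_into_rtrancl)
        qed
      qed
      have "(adj (T - {e}))\<^sup>*\<^sup>* x y"
        using rtc_sym[OF reach[OF xy(1)]] reach[OF xy(2)] by (rule rtranclp_trans)
      then show False using bridge[OF sg nc] eT xy(3) by blast
    qed
  qed
  have sup: "{{v, p v} | v. v \<in> V \<and> v \<noteq> r} \<subseteq> T" using pT by blast
  show ?thesis using sub sup pT pV by (intro exI[of _ p]) blast
qed



definition tree_of :: "nat \<Rightarrow> nat \<Rightarrow> (nat \<Rightarrow> nat) \<Rightarrow> (nat \<Rightarrow> nat) \<Rightarrow> (nat + nat) set set" where
  "tree_of a b G H = {{Inl i, Inr (G i)} | i. 1 \<le> i \<and> i < a} \<union> {{Inr j, Inl (H j)} | j. j < b}"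

lemma pair_Inl: "{Inl i', q} = {Inl i, Inr j} \<Longrightarrow> i' = i \<and> q = Inr j"
  by (auto simp: doubleton_eq_iff)

lemma pair_Inr: "{Inr j', q} = {Inl i, Inr j} \<Longrightarrow> j' = j \<and> q = Inl i"
  by (auto simp: doubleton_eq_iff)

lemma tree_code:
  assumes T: "T \<in> spanning_trees_Kab a b" and a: "1 \<le> a"
  shows "\<exists>G H. (\<forall>i. 1 \<le> i \<and> i < a \<longrightarrow> G i < b) \<and> (\<forall>j. j < b \<longrightarrow> H j < a) \<and> T = tree_of a b G H"
proof -
  let ?V = "Kab_verts a b"
  have Tsub: "T \<subseteq> Kab_edges a b" and tr: "is_tree ?V T" using T unfolding spanning_trees_Kab_def by auto
  have r: "Inl 0 \<in> ?V" using a unfolding Kab_verts_def by auto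
  obtain p where p1: "\<forall>v\<in>?V - {Inl 0}. p v \<in> ?V \<and> {v, p v} \<in> T"
    and p2: "T = {{v, p v} | v. v \<in> ?V \<and> v \<noteq> Inl 0}"
    using tree_parent[OF tr r] by blast
  define G where "G i = projr (p (Inl i))" for i
  define H where "H j = projl (p (Inr j))" for j
  have A: "p (Inl i) = Inr (G i) \<and> G i < b" if "1 \<le> i" "i < a" for i
  proof -
    have "Inl i \<in> ?V - {Inl 0}" using that unfolding Kab_verts_def by auto
    then have "{Inl i, p (Inl i)} \<in> Kab_edges a b" using p1 Tsub by blast
    then obtain i' j where eq: "{Inl i, p (Inl i)} = {Inl i', Inr j}" and jb: "j < b"
      unfolding Kab_edges_def by blast
    have "p (Inl i) = Inr j" by (rule conjunct2[OF pair_Inl[OF eq]])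
    then show ?thesis unfolding G_def using jb by simp
  qed
  have B: "p (Inr j) = Inl (H j) \<and> H j < a" if "j < b" for j
  proof -
    have "Inr j \<in> ?V - {Inl 0}" using that unfolding Kab_verts_def by auto
    then have "{Inr j, p (Inr j)} \<in> Kab_edges a b" using p1 Tsub by blast
    then obtain i j' where eq: "{Inr j, p (Inr j)} = {Inl i, Inr j'}" and ia: "i < a"
      unfolding Kab_edges_def by blast
    have "p (Inr j) = Inl i" by (rule conjunct2[OF pair_Inr[OF eq]])
    then show ?thesis unfolding H_def using ia by simp
  qed
  have Vd: "?V - {Inl 0} = Inl ` {1..<a} \<union> Inr ` {..<b}"
  proof
    show "?V - {Inl 0} \<subseteq> Inl ` {1..<a} \<union> Inr ` {..<b}"
    proof
      fix v assume v: "v \<in> ?V - {Inl 0}"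
      show "v \<in> Inl ` {1..<a} \<union> Inr ` {..<b}"
      proof (cases v)
        case (Inl i)
        then have "i < a" "i \<noteq> 0" using v unfolding Kab_verts_def by auto
        then show ?thesis using Inl by auto
      next
        case (Inr j)
        then show ?thesis using v unfolding Kab_verts_def by auto
      qed
    qed
  next
    show "Inl ` {1..<a} \<union> Inr ` {..<b} \<subseteq> ?V - {Inl 0}" unfolding Kab_verts_def by auto
  qed
  have "T = {{v, p v} | v. v \<in> Inl ` {1..<a} \<union> Inr ` {..<b}}"
  proof -
    have "{{v, p v} | v. v \<in> ?V \<and> v \<noteq> Inl 0} = {{v, p v} | v. v \<in> ?V - {Inl 0}}" by simp
    then show ?thesis unfolding p2 Vd by simp
  qed
  also have "\<dots> = tree_of a b G H"
  proof
    show "{{v, p v} | v. v \<in> Inl ` {1..<a} \<union> Inr ` {..<b}} \<subseteq> tree_of a b G H"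
    proof
      fix e assume "e \<in> {{v, p v} | v. v \<in> Inl ` {1..<a} \<union> Inr ` {..<b}}"
      then obtain v where v: "e = {v, p v}" "v \<in> Inl ` {1..<a} \<union> Inr ` {..<b}" by blast
      then show "e \<in> tree_of a b G H"
      proof (cases "v \<in> Inl ` {1..<a}")
        case True
        then obtain i where "v = Inl i" "1 \<le> i" "i < a" by auto
        then have "e = {Inl i, Inr (G i)}" using A v(1) by simp
        then show ?thesis unfolding tree_of_def using \<open>1 \<le> i\<close> \<open>i < a\<close> by (intro UnI1 CollectI exI[of _ i]) simp
      next
        case False
        then obtain j where "v = Inr j" "j < b" using v(2) by auto
        then have "e = {Inr j, Inl (H j)}" using B v(1) by simp
        then show ?thesis unfolding tree_of_def using \<open>j < b\<close> by (intro UnI2 CollectI exI[of _ j]) simp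
      qed
    qed
  next
    show "tree_of a b G H \<subseteq> {{v, p v} | v. v \<in> Inl ` {1..<a} \<union> Inr ` {..<b}}"
    proof
      fix e assume "e \<in> tree_of a b G H"
      then consider (l) i where "e = {Inl i, Inr (G i)}" "1 \<le> i" "i < a"
        | (r) j where "e = {Inr j, Inl (H j)}" "j < b" unfolding tree_of_def by blast
      then show "e \<in> {{v, p v} | v. v \<in> Inl ` {1..<a} \<union> Inr ` {..<b}}"
      proof cases
        case l
        then have "e = {Inl i, p (Inl i)}" "Inl i \<in> Inl ` {1..<a} \<union> Inr ` {..<b}" using A by auto
        then show ?thesis by (intro CollectI exI[of _ "Inl i"]) simp
      next
        case r
        then have "e = {Inr j, p (Inr j)}" "Inr j \<in> Inl ` {1..<a} \<union> Inr ` {..<b}" using B by auto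
        then show ?thesis by (intro CollectI exI[of _ "Inr j"]) simp
      qed
    qed
  qed
  finally show ?thesis using A B by blast
qed

lemma iso_image:
  assumes f: "bij_betw f V W" and E: "\<forall>e\<in>E. e \<subseteq> V"
  shows "graph_iso V E W ((`) f ` E)"
  unfolding graph_iso_def
proof (intro exI[of _ f] conjI ballI)
  show "bij_betw f V W" by fact
  fix u v assume uv: "u \<in> V" "v \<in> V"
  have inj: "inj_on f V" using f by (rule bij_betw_imp_inj_on)
  show "{u, v} \<in> E \<longleftrightarrow> {f u, f v} \<in> (`) f ` E"
  proof
    assume "{u, v} \<in> E"
    then show "{f u, f v} \<in> (`) f ` E" by (intro image_eqI[of _ _ "{u,v}"]) simp_all
  next
    assume "{f u, f v} \<in> (`) f ` E"
    then obtain e where e: "e \<in> E" "f ` {u, v} = f ` e" by auto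
    have "e \<subseteq> V" using E e(1) by blast
    moreover have "{u, v} \<subseteq> V" using uv by simp
    ultimately have "{u, v} = e" using inj_on_image_eq_iff[OF inj, of "{u,v}" e] e(2) by simp
    then show "{u, v} \<in> E" using e by simp
  qed
qed

lemma graph_iso_refl: "graph_iso V E V E"
  unfolding graph_iso_def by (intro exI[of _ id]) auto

lemma graph_iso_sym:
  assumes "graph_iso V1 E1 V2 E2" shows "graph_iso V2 E2 V1 E1"
proof -
  obtain f where f: "bij_betw f V1 V2" "\<forall>u\<in>V1. \<forall>v\<in>V1. {u, v} \<in> E1 \<longleftrightarrow> {f u, f v} \<in> E2"
    using assms unfolding graph_iso_def by blast
  define g where "g = inv_into V1 f"
  have g: "bij_betw g V2 V1" unfolding g_def by (rule bij_betw_inv_into[OF f(1)])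
  have fg: "f (g x) = x" if "x \<in> V2" for x
    unfolding g_def using f(1) that by (metis bij_betw_inv_into_right)
  show ?thesis unfolding graph_iso_def
  proof (intro exI[of _ g] conjI ballI)
    show "bij_betw g V2 V1" by fact
    fix u v assume uv: "u \<in> V2" "v \<in> V2"
    have "g u \<in> V1" "g v \<in> V1" using g uv by (auto simp: bij_betw_def)
    then have "{g u, g v} \<in> E1 \<longleftrightarrow> {f (g u), f (g v)} \<in> E2" using f(2) by blast
    then show "{u, v} \<in> E2 \<longleftrightarrow> {g u, g v} \<in> E1" using fg uv by simp
  qed
qed

lemma graph_iso_trans:
  assumes "graph_iso V1 E1 V2 E2" "graph_iso V2 E2 V3 E3" shows "graph_iso V1 E1 V3 E3"
proof -
  obtain f where f: "bij_betw f V1 V2" "\<forall>u\<in>V1. \<forall>v\<in>V1. {u, v} \<in> E1 \<longleftrightarrow> {f u, f v} \<in> E2"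
    using assms(1) unfolding graph_iso_def by blast
  obtain g where g: "bij_betw g V2 V3" "\<forall>u\<in>V2. \<forall>v\<in>V2. {u, v} \<in> E2 \<longleftrightarrow> {g u, g v} \<in> E3"
    using assms(2) unfolding graph_iso_def by blast
  show ?thesis unfolding graph_iso_def
  proof (intro exI[of _ "g \<circ> f"] conjI ballI)
    show "bij_betw (g \<circ> f) V1 V3" using f(1) g(1) by (rule bij_betw_trans)
    fix u v assume uv: "u \<in> V1" "v \<in> V1"
    have "f u \<in> V2" "f v \<in> V2" using f(1) uv by (auto simp: bij_betw_def)
    then show "{u, v} \<in> E1 \<longleftrightarrow> {(g \<circ> f) u, (g \<circ> f) v} \<in> E3" using f(2) g(2) uv by simp
  qed
qed



lemma rg:
  fixes G :: "nat \<Rightarrow> nat"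
  shows "\<exists>\<sigma>. inj_on \<sigma> (G ` {1..<n}) \<and> \<sigma> ` G ` {1..<n} \<subseteq> {..<card (G ` {1..<n})} \<and>
             (\<forall>i. 1 \<le> i \<and> i < n \<longrightarrow> \<sigma> (G i) < i)"
proof (induction n)
  case 0
  show ?case by (intro exI[of _ id]) simp
next
  case (Suc n)
  show ?case
  proof (cases "n = 0")
    case True
    then show ?thesis by (intro exI[of _ id]) simp
  next
    case False
    obtain \<sigma> where s: "inj_on \<sigma> (G ` {1..<n})" "\<sigma> ` G ` {1..<n} \<subseteq> {..<card (G ` {1..<n})}"
      "\<forall>i. 1 \<le> i \<and> i < n \<longrightarrow> \<sigma> (G i) < i" using Suc.IH by blast
    have iv: "{1..<Suc n} = insert n {1..<n}" using False by auto
    have im: "G ` {1..<Suc n} = insert (G n) (G ` {1..<n})" unfolding iv by simp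
    have cle: "card (G ` {1..<n}) \<le> n - 1"
      using card_image_le[of "{1..<n}" G] by simp
    show ?thesis
    proof (cases "G n \<in> G ` {1..<n}")
      case True
      then obtain j where jj: "j \<in> {1..<n}" "G n = G j" by (rule imageE) simp
      then have j: "1 \<le> j" "j < n" "G n = G j" by auto
      have "\<sigma> (G j) < j" using s(3)[rule_format, of j] j(1,2) by simp
      then have sn: "\<sigma> (G n) < n" using j by simp
      have "\<forall>i. 1 \<le> i \<and> i < Suc n \<longrightarrow> \<sigma> (G i) < i"
      proof (intro allI impI)
        fix i assume i: "1 \<le> i \<and> i < Suc n"
        show "\<sigma> (G i) < i"
        proof (cases "i = n")
          case True then show ?thesis using sn by simp
        next
          case False then show ?thesis using s(3)[rule_format, of i] i by simp
        qed
      qed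
      moreover have "G ` {1..<Suc n} = G ` {1..<n}" unfolding im using True by (rule insert_absorb)
      ultimately show ?thesis using s by (intro exI[of _ \<sigma>]) simp
    next
      case False
      define S where "S = G ` {1..<n}"
      define \<sigma>' where "\<sigma>' = \<sigma>(G n := card S)"
      have GnS: "G n \<notin> S" using False unfolding S_def .
      have finS: "finite S" unfolding S_def by simp
      have im2: "G ` {1..<Suc n} = insert (G n) S" using im unfolding S_def .
      have cn: "card (insert (G n) S) = Suc (card S)"
        by (rule card_insert_disjoint[OF finS GnS])
      have eqS: "\<sigma>' x = \<sigma> x" if "x \<in> S" for x
        using that GnS unfolding \<sigma>'_def by auto
      have injS: "inj_on \<sigma>' S" using s(1) eqS unfolding S_def[symmetric]
        by (metis inj_on_cong)
      have imS: "\<sigma>' ` S \<subseteq> {..<card S}" using s(2) eqS unfolding S_def[symmetric]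
        by auto
      have new: "\<sigma>' (G n) = card S" unfolding \<sigma>'_def by simp
      have "inj_on \<sigma>' (insert (G n) S)"
        unfolding inj_on_insert using injS imS new by auto
      then have "inj_on \<sigma>' (G ` {1..<Suc n})" using im2 by simp
      moreover have "\<sigma>' ` (insert (G n) S) \<subseteq> {..<card (insert (G n) S)}"
        using imS new cn by auto
      then have "\<sigma>' ` G ` {1..<Suc n} \<subseteq> {..<card (G ` {1..<Suc n})}" using im2 by simp
      moreover have "\<forall>i. 1 \<le> i \<and> i < Suc n \<longrightarrow> \<sigma>' (G i) < i"
      proof (intro allI impI)
        fix i assume i: "1 \<le> i \<and> i < Suc n"
        show "\<sigma>' (G i) < i"
        proof (cases "i = n")
          case True
          then show ?thesis using new cle \<open>n \<noteq> 0\<close> unfolding S_def by simp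
        next
          case ne: False
          then have "i < n" using i by simp
          have "G i \<in> S" using i \<open>i < n\<close> unfolding S_def by simp
          then show ?thesis using eqS s(3) i \<open>i < n\<close> by simp
        qed
      qed
      ultimately show ?thesis by blast
    qed
  qed
qed

lemma extend_perm:
  assumes B: "finite B" and AB: "A \<subseteq> B" and inj: "inj_on f A" and fA: "f ` A \<subseteq> B"
  shows "\<exists>g. bij_betw g B B \<and> (\<forall>x\<in>A. g x = f x)"
proof -
  have fin: "finite A" using B AB finite_subset by blast
  have "card (B - A) = card (B - f ` A)"
    using B AB fA card_Diff_subset[OF fin AB] card_Diff_subset[of "f ` A" B] fin
      card_image[OF inj] by simp
  then obtain \<phi> where phi: "bij_betw \<phi> (B - A) (B - f ` A)"
    using finite_same_card_bij B by blast
  define g where "g x = (if x \<in> A then f x else \<phi> x)" for x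
  have g1: "bij_betw g A (f ` A)" unfolding bij_betw_def g_def using inj
    by (auto simp: inj_on_def)
  have g2: "bij_betw g (B - A) (B - f ` A)"
    using phi unfolding g_def by (rule bij_betw_cong[THEN iffD1, rotated]) auto
  have "bij_betw g (A \<union> (B - A)) (f ` A \<union> (B - f ` A))"
    by (rule bij_betw_combine[OF g1 g2]) auto
  moreover have "A \<union> (B - A) = B" "f ` A \<union> (B - f ` A) = B" using AB fA by auto
  ultimately have "bij_betw g B B" by simp
  then show ?thesis by (intro exI[of _ g]) (auto simp: g_def)
qed

lemma normalize:
  fixes a b :: nat and G :: "nat \<Rightarrow> nat"
  assumes G: "\<forall>i. 1 \<le> i \<and> i < a \<longrightarrow> G i < b" and ab: "a \<le> b"
  shows "\<exists>\<sigma>. bij_betw \<sigma> {..<b} {..<b} \<and> (\<forall>i. 1 \<le> i \<and> i < a \<longrightarrow> \<sigma> (G i) < i)"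
proof -
  obtain \<sigma> where s: "inj_on \<sigma> (G ` {1..<a})" "\<sigma> ` G ` {1..<a} \<subseteq> {..<card (G ` {1..<a})}"
      "\<forall>i. 1 \<le> i \<and> i < a \<longrightarrow> \<sigma> (G i) < i" using rg by blast
  have "card (G ` {1..<a}) \<le> b" using card_image_le[of "{1..<a}" G] ab by simp
  then have fs: "\<sigma> ` G ` {1..<a} \<subseteq> {..<b}" using s(2) by (meson lessThan_subset_iff order_trans)
  have sub: "G ` {1..<a} \<subseteq> {..<b}" using G by auto
  obtain g where g: "bij_betw g {..<b} {..<b}" "\<forall>x\<in>G ` {1..<a}. g x = \<sigma> x"
    using extend_perm[OF _ sub s(1) fs] by auto
  show ?thesis using g s(3) by (intro exI[of _ g]) auto
qed



lemma map_sum_bij: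
  assumes s: "bij_betw \<sigma> {..<b} {..<b}"
  shows "bij_betw (map_sum id \<sigma>) (Kab_verts a b) (Kab_verts a b)"
  unfolding bij_betw_def
proof
  have inj: "inj_on \<sigma> {..<b}" using s by (rule bij_betw_imp_inj_on)
  show "inj_on (map_sum id \<sigma>) (Kab_verts a b)"
  proof (rule inj_onI)
    fix x y assume x: "x \<in> Kab_verts a b" and y: "y \<in> Kab_verts a b"
      and eq: "map_sum id \<sigma> x = map_sum id \<sigma> y"
    show "x = y"
    proof (cases x)
      case (Inl i) then show ?thesis using eq by (cases y) auto
    next
      case (Inr j)
      then obtain j' where y': "y = Inr j'" using eq by (cases y) auto
      have "j < b" "j' < b" using x y Inr y' unfolding Kab_verts_def by auto
      moreover have "\<sigma> j = \<sigma> j'" using eq Inr y' by simp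
      ultimately show ?thesis using inj Inr y' by (simp add: inj_on_def)
    qed
  qed
  have im: "\<sigma> ` {..<b} = {..<b}" using s by (simp add: bij_betw_def)
  have "map_sum id \<sigma> ` Kab_verts a b = Inl ` {..<a} \<union> Inr ` (\<sigma> ` {..<b})"
    unfolding Kab_verts_def image_Un image_image by simp
  then show "map_sum id \<sigma> ` Kab_verts a b = Kab_verts a b"
    unfolding im Kab_verts_def .
qed

lemma tree_of_image:
  assumes s: "bij_betw \<sigma> {..<b} {..<b}"
    and G: "\<forall>i. 1 \<le> i \<and> i < a \<longrightarrow> G i < b"
    and G': "\<forall>i. 1 \<le> i \<and> i < a \<longrightarrow> G' i = \<sigma> (G i)"
    and H': "\<forall>j. j < b \<longrightarrow> H' j = H (inv_into {..<b} \<sigma> j)"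
  shows "tree_of a b G' H' = (`) (map_sum id \<sigma>) ` tree_of a b G H"
proof
  let ?f = "map_sum id \<sigma>"
  let ?\<tau> = "inv_into {..<b} \<sigma>"
  have t1: "?\<tau> j < b" if "j < b" for j
    using bij_betw_inv_into[OF s] that by (auto simp: bij_betw_def)
  have t2: "\<sigma> (?\<tau> j) = j" if "j < b" for j
    using s that by (meson bij_betw_inv_into_right lessThan_iff)
  have t3: "?\<tau> (\<sigma> j) = j" if "j < b" for j
    using s that by (meson bij_betw_inv_into_left lessThan_iff)
  have s1: "\<sigma> j < b" if "j < b" for j using s that by (auto simp: bij_betw_def)
  show "tree_of a b G' H' \<subseteq> (`) ?f ` tree_of a b G H"
  proof
    fix e assume "e \<in> tree_of a b G' H'"
    then consider (l) i where "e = {Inl i, Inr (G' i)}" "1 \<le> i" "i < a"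
        | (r) j where "e = {Inr j, Inl (H' j)}" "j < b" unfolding tree_of_def by blast
    then show "e \<in> (`) ?f ` tree_of a b G H"
    proof cases
      case l
      have "{Inl i, Inr (G i)} \<in> tree_of a b G H" unfolding tree_of_def using l
        by (intro UnI1 CollectI exI[of _ i]) simp
      moreover have "e = ?f ` {Inl i, Inr (G i)}" using l G' by simp
      ultimately show ?thesis by (rule rev_image_eqI)
    next
      case r
      have "{Inr (?\<tau> j), Inl (H (?\<tau> j))} \<in> tree_of a b G H" unfolding tree_of_def using r t1
        by (intro UnI2 CollectI exI[of _ "?\<tau> j"]) simp
      moreover have "e = ?f ` {Inr (?\<tau> j), Inl (H (?\<tau> j))}" using r H' t2 by simp
      ultimately show ?thesis by (rule rev_image_eqI)
    qed
  qed
  show "(`) ?f ` tree_of a b G H \<subseteq> tree_of a b G' H'"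
  proof
    fix e assume "e \<in> (`) ?f ` tree_of a b G H"
    then obtain e0 where e0: "e0 \<in> tree_of a b G H" "e = ?f ` e0" by blast
    from e0(1) consider (l) i where "e0 = {Inl i, Inr (G i)}" "1 \<le> i" "i < a"
        | (r) j where "e0 = {Inr j, Inl (H j)}" "j < b" unfolding tree_of_def by blast
    then show "e \<in> tree_of a b G' H'"
    proof cases
      case l
      then have "e = {Inl i, Inr (G' i)}" using e0(2) G' by simp
      then show ?thesis unfolding tree_of_def using l
        by (intro UnI1 CollectI exI[of _ i]) simp
    next
      case r
      then have "e = {Inr (\<sigma> j), Inl (H' (\<sigma> j))}" using e0(2) H' t3 s1 by simp
      then show ?thesis unfolding tree_of_def using r s1
        by (intro UnI2 CollectI exI[of _ "\<sigma> j"]) simp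
    qed
  qed
qed

lemma tree_edges_sub:
  assumes "T \<in> spanning_trees_Kab a b"
  shows "\<forall>e\<in>T. e \<subseteq> Kab_verts a b"
proof
  fix e assume e: "e \<in> T"
  have "simple_graph (Kab_verts a b) T" using assms unfolding spanning_trees_Kab_def is_tree_def by auto
  then obtain u v where "u \<in> Kab_verts a b" "v \<in> Kab_verts a b" "e = {u, v}"
    using e unfolding simple_graph_def by blast
  then show "e \<subseteq> Kab_verts a b" by simp
qed

lemma prod_bound:
  fixes a :: nat assumes "2 \<le> a"
  shows "(\<Prod>i\<in>{1..<a}. i) \<le> a ^ (a - 2)"
proof -
  have "{1..<a} = insert 1 {2..<a}" using assms by auto
  then have "(\<Prod>i\<in>{1..<a}. i) = (\<Prod>i\<in>{2..<a}. i)" by simp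
  also have "\<dots> \<le> (\<Prod>i\<in>{2..<a}. a)" by (rule prod_mono) simp
  also have "\<dots> = a ^ (a - 2)" by simp
  finally show ?thesis .
qed



theorem theorem2p6:
  fixes a b :: nat
  assumes "2 \<le> a" and "a < b"
  shows "I_count a b \<le> a ^ (a + b - 2)"
proof -
  let ?S = "spanning_trees_Kab a b"
  let ?R = "tree_iso_rel a b"
  let ?V = "Kab_verts a b"
  define Codes where "Codes = (PiE {1..<a} (\<lambda>i. {..<i})) \<times> (PiE {..<b} (\<lambda>_. {..<a}))"
  have eqv: "equiv ?S ?R"
    unfolding equiv_def refl_on_def sym_def trans_def tree_iso_rel_def
    using graph_iso_refl graph_iso_sym graph_iso_trans by blast
  have Rsub: "?R \<subseteq> ?S \<times> ?S" unfolding tree_iso_rel_def by auto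
  define P where "P X c \<longleftrightarrow> c \<in> Codes \<and> (\<exists>T\<in>X. graph_iso ?V T ?V (tree_of a b (fst c) (snd c)))"
    for X c
  have ex: "\<exists>c. P X c" if X: "X \<in> ?S // ?R" for X
  proof -
    obtain x where x: "x \<in> ?S" "X = ?R `` {x}" using X by (rule quotientE)
    have xX: "x \<in> X" using x graph_iso_refl unfolding tree_iso_rel_def by simp
    obtain G H where GH: "\<forall>i. 1 \<le> i \<and> i < a \<longrightarrow> G i < b" "\<forall>j. j < b \<longrightarrow> H j < a"
      "x = tree_of a b G H" using tree_code[OF x(1)] assms by auto
    obtain \<sigma> where s: "bij_betw \<sigma> {..<b} {..<b}" "\<forall>i. 1 \<le> i \<and> i < a \<longrightarrow> \<sigma> (G i) < i"
      using normalize[OF GH(1)] assms by auto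
    define G' where "G' = restrict (\<lambda>i. \<sigma> (G i)) {1..<a}"
    define H' where "H' = restrict (\<lambda>j. H (inv_into {..<b} \<sigma> j)) {..<b}"
    have t1: "inv_into {..<b} \<sigma> j < b" if "j < b" for j
      using bij_betw_inv_into[OF s(1)] that by (auto simp: bij_betw_def)
    have "G' \<in> PiE {1..<a} (\<lambda>i. {..<i})" unfolding G'_def using s(2) by auto
    moreover have "H' \<in> PiE {..<b} (\<lambda>_. {..<a})" unfolding H'_def using GH(2) t1 by auto
    ultimately have cC: "(G', H') \<in> Codes" unfolding Codes_def by simp
    have "tree_of a b G' H' = (`) (map_sum id \<sigma>) ` tree_of a b G H"
      by (rule tree_of_image[OF s(1) GH(1)]) (auto simp: G'_def H'_def)
    then have "graph_iso ?V x ?V (tree_of a b G' H')"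
      using iso_image[OF map_sum_bij[OF s(1)] tree_edges_sub[OF x(1)]] GH(3) by simp
    then show ?thesis unfolding P_def using cC xX by (intro exI[of _ "(G', H')"]) auto
  qed
  define code where "code X = (SOME c. P X c)" for X
  have codeP: "P X (code X)" if "X \<in> ?S // ?R" for X
    unfolding code_def using ex[OF that] by (rule someI_ex)
  have inj: "inj_on code (?S // ?R)"
  proof (rule inj_onI)
    fix X Y assume X: "X \<in> ?S // ?R" and Y: "Y \<in> ?S // ?R" and eq: "code X = code Y"
    obtain T1 where T1: "T1 \<in> X" "graph_iso ?V T1 ?V (tree_of a b (fst (code X)) (snd (code X)))"
      using codeP[OF X] unfolding P_def by blast
    obtain T2 where T2: "T2 \<in> Y" "graph_iso ?V T2 ?V (tree_of a b (fst (code X)) (snd (code X)))"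
      using codeP[OF Y] eq unfolding P_def by auto
    have "graph_iso ?V T1 ?V T2" using graph_iso_trans[OF T1(2) graph_iso_sym[OF T2(2)]] .
    moreover have "T1 \<in> ?S" "T2 \<in> ?S"
      using T1(1) T2(1) X Y Rsub by (auto elim!: quotientE)
    ultimately have "(T1, T2) \<in> ?R" unfolding tree_iso_rel_def by simp
    then show "X = Y" using quotient_eqI[OF eqv X Y T1(1) T2(1)] by simp
  qed
  have sub: "code ` (?S // ?R) \<subseteq> Codes" using codeP unfolding P_def by blast
  have fin: "finite Codes" unfolding Codes_def by (simp add: finite_PiE)
  have "I_count a b \<le> card Codes"
    unfolding I_count_def by (rule card_inj_on_le[OF inj sub fin])
  also have "card Codes = (\<Prod>i\<in>{1..<a}. i) * a ^ b"
    unfolding Codes_def by (simp add: card_cartesian_product card_PiE)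
  also have "\<dots> \<le> a ^ (a - 2) * a ^ b"
    using prod_bound[OF assms(1)] by simp
  also have "\<dots> = a ^ (a + b - 2)"
    using assms(1) by (simp add: power_add[symmetric])
  finally show ?thesis .
qed

end
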